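(* Let $g$ be an associative algebra equipped with a nondegenerate symmetric bilinear form $\langle\cdot,\cdot\rangle$ satisfying $\langle u v,w\rangle=\langle u,v w\rangle$ for all $u,v,w\in g$. Let $n\ge 1$ and let $\mathbf{g}=g\oplus\cdots\oplus g$ ($n$ copies) with componentwise multiplication and bilinear form $\langle\langle \mathbf{u},\mathbf{v}\rangle\rangle=\sum_{k=1}^n\langle u_k,v_k\rangle$. Let $\mathbf{A}$ be a linear operator on $\mathbf{g}$, written in components as $(\mathbf{A}(\mathbf{u}))_i=\sum_{j=1}^n A_{ij}(u_j)$ with linear operators $A_{ij}$ on $g$, and suppose $\mathbf{A}$ is skew-symmetric, i.e. $A_{ij}^*=-A_{ji}$ for all $i,j$. Let $\alpha$ be a constant. Then $\mathbf{A}$ satisfies mYB$(\mathbf{A};\alpha)$ on $\mathbf{g}$ if and only if all of the following hold: (1) mYB$(A_{jj};\alpha)$ for every $j=1,\dots,n$; (2) Hom$(A_{ij},A_{jj})$ for every $i\neq j$; (3) for every triple $i<j<k$ and all $X,Y\in g$: $[A_{ij}(X),A_{ik}(Y)]=A_{ik}\big([A_{kj}(X),Y]\big)+A_{ij}\big([X,A_{jk}(Y)]\big)$.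
   Context: $[X,Y]=XY-YX$ denotes the commutator (in $\mathbf{g}$ it is taken componentwise). For a linear operator $X$ on $g$, $X^*$ denotes its adjoint with respect to $\langle\cdot,\cdot\rangle$. For a linear operator $R$ on an associative algebra and a constant $\alpha$, the condition mYB$(R;\alpha)$ means $[R(X),R(Y)]=R\big([R(X),Y]+[X,R(Y)]\big)-\alpha[X,Y]$ for all $X,Y$. For linear operators $S,A$, the condition Hom$(S,A)$ means $[S(X),S(Y)]=S\big([A(X),Y]+[X,A(Y)]\big)$ for all $X,Y$. *)

theory Defs
  imports Complex_Main "HOL-Library.Function_Algebras"
begin

definition comm :: "'a::ring \<Rightarrow> 'a \<Rightarrow> 'a" where
  "comm x y = x * y - y * x"

definition assoc_algebra :: "('k::field \<Rightarrow> 'a::ring \<Rightarrow> 'a) \<Rightarrow> bool" where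
  "assoc_algebra sc \<longleftrightarrow> Vector_Spaces.vector_space sc \<and>
     (\<forall>c x y. sc c (x * y) = sc c x * y \<and> sc c (x * y) = x * sc c y)"

definition mYB :: "('k \<Rightarrow> 'a::ring \<Rightarrow> 'a) \<Rightarrow> 'a set \<Rightarrow> ('a \<Rightarrow> 'a) \<Rightarrow> 'k \<Rightarrow> bool" where
  "mYB sc S R \<alpha> \<longleftrightarrow> (\<forall>X\<in>S. \<forall>Y\<in>S.
     comm (R X) (R Y) = R (comm (R X) Y + comm X (R Y)) - sc \<alpha> (comm X Y))"

definition Hom :: "('a::ring \<Rightarrow> 'a) \<Rightarrow> ('a \<Rightarrow> 'a) \<Rightarrow> bool" where
  "Hom S A \<longleftrightarrow> (\<forall>X Y. comm (S X) (S Y) = S (comm (A X) Y + comm X (A Y)))"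

definition is_adjoint :: "('a \<Rightarrow> 'a \<Rightarrow> 'k) \<Rightarrow> ('a \<Rightarrow> 'a) \<Rightarrow> ('a \<Rightarrow> 'a) \<Rightarrow> bool" where
  "is_adjoint B X Y \<longleftrightarrow> (\<forall>u v. B (X u) v = B u (Y v))"

definition invariant_form :: "('k::field \<Rightarrow> 'a::ring \<Rightarrow> 'a) \<Rightarrow> ('a \<Rightarrow> 'a \<Rightarrow> 'k) \<Rightarrow> bool" where
  "invariant_form sc B \<longleftrightarrow>
     (\<forall>u. Vector_Spaces.linear sc (*) (B u)) \<and>
     (\<forall>u v. B u v = B v u) \<and>
     (\<forall>u. (\<forall>v. B u v = 0) \<longrightarrow> u = 0) \<and>
     (\<forall>u v w. B (u * v) w = B u (v * w))"

text \<open>The direct sum of n copies of g: functions nat => g vanishing outside {..<n},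
  with componentwise operations.\<close>
definition dsum :: "nat \<Rightarrow> (nat \<Rightarrow> 'a::zero) set" where
  "dsum n = {u. \<forall>i\<ge>n. u i = 0}"

definition dscale :: "('k \<Rightarrow> 'a \<Rightarrow> 'a) \<Rightarrow> 'k \<Rightarrow> (nat \<Rightarrow> 'a) \<Rightarrow> (nat \<Rightarrow> 'a)" where
  "dscale sc c u = (\<lambda>i. sc c (u i))"

definition dform :: "nat \<Rightarrow> ('a \<Rightarrow> 'a \<Rightarrow> 'k::comm_monoid_add) \<Rightarrow> (nat \<Rightarrow> 'a) \<Rightarrow> (nat \<Rightarrow> 'a) \<Rightarrow> 'k" where
  "dform n B u v = (\<Sum>k<n. B (u k) (v k))"

definition blockop :: "nat \<Rightarrow> (nat \<Rightarrow> nat \<Rightarrow> 'a \<Rightarrow> 'a::comm_monoid_add) \<Rightarrow> (nat \<Rightarrow> 'a) \<Rightarrow> (nat \<Rightarrow> 'a)" where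
  "blockop n A u = (\<lambda>i. if i < n then (\<Sum>j<n. A i j (u j)) else 0)"

end

theory Submission
  imports Defs
begin

lemma comm_fun: "comm (f::nat \<Rightarrow> 'a::ring) g i = comm (f i) (g i)"
  by (simp add: comm_def)

lemma comm_sum_left: "comm (sum f S) (y::'a::ring) = (\<Sum>a\<in>S. comm (f a) y)"
  by (simp add: comm_def sum_distrib_left sum_distrib_right sum_subtractf)

lemma comm_sum_right: "comm (y::'a::ring) (sum f S) = (\<Sum>a\<in>S. comm y (f a))"
  by (simp add: comm_def sum_distrib_left sum_distrib_right sum_subtractf)

lemma comm_zero [simp]: "comm 0 (y::'a::ring) = 0" "comm y 0 = 0"
  by (simp_all add: comm_def)

lemma comm_anti: "comm (x::'a::ring) y = - comm y x"
  by (simp add: comm_def)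

theorem proposition3:
  fixes sc :: "'k::field \<Rightarrow> 'a::ring \<Rightarrow> 'a"
    and B :: "'a \<Rightarrow> 'a \<Rightarrow> 'k"
    and n :: nat
    and A :: "nat \<Rightarrow> nat \<Rightarrow> 'a \<Rightarrow> 'a"
    and \<alpha> :: 'k
  assumes alg: "assoc_algebra sc"
    and form: "invariant_form sc B"
    and n: "n \<ge> 1"
    and lin: "\<forall>i<n. \<forall>j<n. Vector_Spaces.linear sc sc (A i j)"
    and skew: "\<forall>i<n. \<forall>j<n. is_adjoint B (A i j) (\<lambda>v. - A j i v)"
  shows "mYB (dscale sc) (dsum n) (blockop n A) \<alpha> \<longleftrightarrow>
           (\<forall>j<n. mYB sc UNIV (A j j) \<alpha>) \<and>
           (\<forall>i<n. \<forall>j<n. i \<noteq> j \<longrightarrow> Hom (A i j) (A j j)) \<and>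
           (\<forall>i j k. i < j \<and> j < k \<and> k < n \<longrightarrow> (\<forall>X Y.
              comm (A i j X) (A i k Y) = A i k (comm (A k j X) Y) + A i j (comm X (A j k Y))))"
proof -
  have addA: "additive (A i j)" if "i<n" "j<n" for i j
  proof
    fix x y
    have "Vector_Spaces.linear sc sc (A i j)" using lin that by blast
    then have "module_hom sc sc (A i j)" by (simp only: linear_iff_module_hom)
    then show "A i j (x + y) = A i j x + A i j y" by (rule module_hom.add)
  qed
  have vs: "Vector_Spaces.vector_space sc" using alg unfolding assoc_algebra_def by (rule conjunct1)
  have addS: "additive (sc c)" for c
  proof
    fix x y show "sc c (x + y) = sc c x + sc c y" by (rule vector_space.vector_space_assms(1)[OF vs])
  qed
  have F: "(\<forall>u. Vector_Spaces.linear sc (*) (B u)) \<and>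
     (\<forall>u v. B u v = B v u) \<and>
     (\<forall>u. (\<forall>v. B u v = 0) \<longrightarrow> u = 0) \<and>
     (\<forall>u v w. B (u * v) w = B u (v * w))" using form unfolding invariant_form_def .
  have Blin: "module_hom sc (*) (B u)" for u
    using F by (simp only: linear_iff_module_hom)
  have addB2: "additive (B u)" for u
  proof
    fix x y show "B u (x + y) = B u x + B u y" by (rule module_hom.add[OF Blin])
  qed
  have Bscale: "B u (sc c v) = c * B u v" for u c v
    by (rule module_hom.scale[OF Blin])
  have Bsym: "B u v = B v u" for u v using F by blast
  have Bnd: "(\<forall>v. B u v = 0) \<Longrightarrow> u = 0" for u using F by blast
  have Binv: "B (u * v) w = B u (v * w)" for u v w using F by blast
  have addB1: "additive (\<lambda>u. B u w)" for w
  proof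
    fix x y
    have "B (x + y) w = B w (x + y)" by (rule Bsym)
    also have "\<dots> = B w x + B w y" by (rule additive.add[OF addB2])
    also have "\<dots> = B x w + B y w" using Bsym[of w x] Bsym[of w y] by simp
    finally show "B (x + y) w = B x w + B y w" .
  qed
  have Bscale1: "B (sc c v) u = c * B v u" for u c v
    using Bscale[of u c v] Bsym[of "sc c v" u] Bsym[of v u] by simp
  have skw: "B (A i j u) v = - B u (A j i v)" if "i<n" "j<n" for i j u v
  proof -
    have "B (A i j u) v = B u (- A j i v)" using skew that unfolding is_adjoint_def by blast
    then show ?thesis by (simp add: additive.minus[OF addB2])
  qed
  define T where "T u v w = B (comm u v) w" for u v w
  have Tanti: "T u v w = - T v u w" for u v w
    unfolding T_def by (subst comm_anti) (rule additive.minus[OF addB1])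
  have Tcyc: "T u v w = T v w u" for u v w
  proof -
    have e0: "T u v w = B (u*v) w - B (v*u) w" unfolding T_def comm_def
      by (rule additive.diff[OF addB1])
    have e7: "T v w u = B (v*w) u - B (w*v) u" unfolding T_def comm_def
      by (rule additive.diff[OF addB1])
    have e1: "B (u*v) w = B u (v*w)" by (rule Binv)
    have e2: "B (v*u) w = B v (u*w)" by (rule Binv)
    have e3: "B u (v*w) = B (v*w) u" by (rule Bsym)
    have e4: "B v (u*w) = B (u*w) v" by (rule Bsym)
    have e5: "B (u*w) v = B u (w*v)" by (rule Binv)
    have e6: "B u (w*v) = B (w*v) u" by (rule Bsym)
    show ?thesis unfolding e0 e7 e1 e2 e3 e4 e5 e6 by (rule refl)
  qed
  define E where "E i a b x y = comm (A i a x) (A i b y) - A i b (comm (A b a x) y)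
      - A i a (comm x (A a b y)) + (if i=a \<and> i=b then sc \<alpha> (comm x y) else 0)" for i a b x y
  have G: "B (E i a b x y) z = T (A i a x) (A i b y) z + T (A b a x) y (A b i z)
      + T x (A a b y) (A a i z) + (if i=a \<and> i=b then \<alpha> * T x y z else 0)"
    if "i<n" "a<n" "b<n" for i a b x y z
  proof -
    have "B (E i a b x y) z = B (comm (A i a x) (A i b y)) z - B (A i b (comm (A b a x) y)) z
      - B (A i a (comm x (A a b y))) z + B (if i=a \<and> i=b then sc \<alpha> (comm x y) else 0) z"
      unfolding E_def by (simp add: additive.add[OF addB1] additive.diff[OF addB1])
    then show ?thesis
      using that by (simp add: skw T_def Bscale1 additive.zero[OF addB1])
  qed
  define Z where "Z i a b = (\<forall>x y. E i a b x y = 0)" for i a b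
  have Ziff: "Z i a b \<longleftrightarrow> (\<forall>x y z. B (E i a b x y) z = 0)" for i a b
    unfolding Z_def using Bnd additive.zero[OF addB1] by auto
  have Zsym: "Z i a b \<Longrightarrow> Z i b a" if "i<n" "a<n" "b<n" for i a b
  proof -
    have "B (E i b a y x) z = - B (E i a b x y) z" for x y z
      using that
    proof -
      have c: "(i=b \<and> i=a) = (i=a \<and> i=b)" by auto
      have d: "(if i=a \<and> i=b then \<alpha> * - T x y z else 0) = - (if i=a \<and> i=b then \<alpha> * T x y z else 0)"
        by simp
      have "B (E i b a y x) z = T (A i b y) (A i a x) z + T (A a b y) x (A a i z)
          + T y (A b a x) (A b i z) + (if i=b \<and> i=a then \<alpha> * T y x z else 0)"
        by (rule G) (use that in auto)
      also have "\<dots> = - (T (A i a x) (A i b y) z + T (A b a x) y (A b i z)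
          + T x (A a b y) (A a i z) + (if i=a \<and> i=b then \<alpha> * T x y z else 0))"
        unfolding Tanti[of "A i b y" "A i a x" z] Tanti[of "A a b y" x]
          Tanti[of y "A b a x"] Tanti[of y x] c d by (simp add: algebra_simps)
      also have "\<dots> = - B (E i a b x y) z" using G[of i a b x y z] that by simp
      finally show ?thesis .
    qed
    then show "Z i a b \<Longrightarrow> Z i b a" unfolding Ziff by (metis neg_equal_0_iff_equal)
  qed
  have Zcyc: "Z i a b \<Longrightarrow> Z a b i" if "i<n" "a<n" "b<n" for i a b
  proof -
    have "B (E a b i y z) x = B (E i a b x y) z" for x y z
      using that
    proof -
      have c: "(a=b \<and> a=i) = (i=a \<and> i=b)" by auto
      show ?thesis using that G[of a b i y z x] G[of i a b x y z] c
          Tcyc[of x "A a b y" "A a i z"] Tcyc[of x y z]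
          Tcyc[of "A i a x" "A i b y" z] Tcyc[of "A b a x" y "A b i z"]
        by (simp add: ac_simps)
    qed
    then show "Z i a b \<Longrightarrow> Z a b i" unfolding Ziff by metis
  qed
  have RX: "blockop n A X j = (\<Sum>a<n. A j a (X a))" if "j<n" for X j
    using that by (simp add: blockop_def)
  have key: "comm (blockop n A X) (blockop n A Y) i
      - (blockop n A (comm (blockop n A X) Y + comm X (blockop n A Y)) i - dscale sc \<alpha> (comm X Y) i)
      = (\<Sum>a<n. \<Sum>b<n. E i a b (X a) (Y b))" if "i<n" for X Y i
  proof -
    have L: "comm (blockop n A X) (blockop n A Y) i
        = (\<Sum>a<n. \<Sum>b<n. comm (A i a (X a)) (A i b (Y b)))"
      by (simp add: comm_fun RX that comm_sum_left comm_sum_right) (rule sum.swap)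
    have P1: "(\<Sum>b<n. A i b (comm (blockop n A X b) (Y b)))
        = (\<Sum>a<n. \<Sum>b<n. A i b (comm (A b a (X a)) (Y b)))"
    proof -
      have "(\<Sum>b<n. A i b (comm (blockop n A X b) (Y b)))
          = (\<Sum>b<n. \<Sum>a<n. A i b (comm (A b a (X a)) (Y b)))"
        by (rule sum.cong[OF refl]) (simp add: RX comm_sum_left additive.sum[OF addA] that)
      also have "\<dots> = (\<Sum>a<n. \<Sum>b<n. A i b (comm (A b a (X a)) (Y b)))"
        by (rule sum.swap)
      finally show ?thesis .
    qed
    have P2: "(\<Sum>a<n. A i a (comm (X a) (blockop n A Y a)))
        = (\<Sum>a<n. \<Sum>b<n. A i a (comm (X a) (A a b (Y b))))"
      by (rule sum.cong[OF refl]) (simp add: RX comm_sum_right additive.sum[OF addA] that)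
    have "blockop n A (comm (blockop n A X) Y + comm X (blockop n A Y)) i
        = (\<Sum>b<n. A i b ((comm (blockop n A X) Y + comm X (blockop n A Y)) b))"
      by (rule RX[OF that])
    also have "\<dots> = (\<Sum>b<n. A i b (comm (blockop n A X b) (Y b)) + A i b (comm (X b) (blockop n A Y b)))"
      by (rule sum.cong[OF refl]) (simp add: comm_fun additive.add[OF addA] that)
    also have "\<dots> = (\<Sum>b<n. A i b (comm (blockop n A X b) (Y b)))
        + (\<Sum>a<n. A i a (comm (X a) (blockop n A Y a)))"
      by (simp add: sum.distrib)
    finally have P: "blockop n A (comm (blockop n A X) Y + comm X (blockop n A Y)) i
        = (\<Sum>a<n. \<Sum>b<n. A i b (comm (A b a (X a)) (Y b)))
        + (\<Sum>a<n. \<Sum>b<n. A i a (comm (X a) (A a b (Y b))))"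
      using P1 P2 by simp
    have D1: "(\<Sum>b<n. (if i=a \<and> i=b then sc \<alpha> (comm (X a) (Y b)) else 0))
        = (if i = a then sc \<alpha> (comm (X a) (Y i)) else 0)" for a
      by (cases "i=a") (use that in auto)
    have D: "(\<Sum>a<n. \<Sum>b<n. (if i=a \<and> i=b then sc \<alpha> (comm (X a) (Y b)) else 0))
        = dscale sc \<alpha> (comm X Y) i"
      by (simp add: D1 that dscale_def comm_fun)
    have S: "(\<Sum>a<n. \<Sum>b<n. E i a b (X a) (Y b))
        = (\<Sum>a<n. \<Sum>b<n. comm (A i a (X a)) (A i b (Y b)))
        - (\<Sum>a<n. \<Sum>b<n. A i b (comm (A b a (X a)) (Y b)))
        - (\<Sum>a<n. \<Sum>b<n. A i a (comm (X a) (A a b (Y b))))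
        + (\<Sum>a<n. \<Sum>b<n. (if i=a \<and> i=b then sc \<alpha> (comm (X a) (Y b)) else 0))"
      by (simp add: E_def sum.distrib sum_subtractf)
    show ?thesis unfolding S L P D[symmetric] by (simp add: algebra_simps)
  qed
  have hi: "comm (blockop n A X) (blockop n A Y) i
      = (blockop n A (comm (blockop n A X) Y + comm X (blockop n A Y)) - dscale sc \<alpha> (comm X Y)) i"
    if "n \<le> i" "X \<in> dsum n" "Y \<in> dsum n" for X Y i
    using that by (simp add: blockop_def comm_fun dscale_def dsum_def additive.zero[OF addS])
  have E0: "E i a b 0 y = 0" "E i a b x 0 = 0" if "i<n" "a<n" "b<n" for i a b x y
    using that by (simp_all add: E_def additive.zero[OF addA] additive.zero[OF addS])
  have Ecomp: "mYB (dscale sc) (dsum n) (blockop n A) \<alpha> \<longleftrightarrow> (\<forall>i<n. \<forall>a<n. \<forall>b<n. Z i a b)"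
  proof
    assume M: "mYB (dscale sc) (dsum n) (blockop n A) \<alpha>"
    show "\<forall>i<n. \<forall>a<n. \<forall>b<n. Z i a b"
    proof (intro allI impI)
      fix i a b assume iab: "i<n" "a<n" "b<n"
      show "Z i a b" unfolding Z_def
      proof (intro allI)
        fix x y
        define X where "X = (\<lambda>l. if l = a then x else (0::'a))"
        define Y where "Y = (\<lambda>l. if l = b then y else (0::'a))"
        have XY: "X \<in> dsum n" "Y \<in> dsum n" using iab by (auto simp: X_def Y_def dsum_def)
        have "comm (blockop n A X) (blockop n A Y) i
          = (blockop n A (comm (blockop n A X) Y + comm X (blockop n A Y)) - dscale sc \<alpha> (comm X Y)) i"
          using M XY unfolding mYB_def by metis
        then have "(\<Sum>a<n. \<Sum>b<n. E i a b (X a) (Y b)) = 0"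
          using key[OF iab(1), of X Y] by simp
        moreover have "E i a' b' (X a') (Y b') = (if b' = b then if a' = a then E i a b x y else 0 else 0)"
          if "a' < n" "b' < n" for a' b'
          using E0 iab that by (simp add: X_def Y_def)
        ultimately show "E i a b x y = 0" using iab by simp
      qed
    qed
  next
    assume Z: "\<forall>i<n. \<forall>a<n. \<forall>b<n. Z i a b"
    show "mYB (dscale sc) (dsum n) (blockop n A) \<alpha>"
      unfolding mYB_def
    proof (intro ballI ext)
      fix X Y :: "nat \<Rightarrow> 'a" and i assume XY: "X \<in> dsum n" "Y \<in> dsum n"
      show "comm (blockop n A X) (blockop n A Y) i
        = (blockop n A (comm (blockop n A X) Y + comm X (blockop n A Y)) - dscale sc \<alpha> (comm X Y)) i"
      proof (cases "i < n")
        case True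
        have "(\<Sum>a<n. \<Sum>b<n. E i a b (X a) (Y b)) = 0"
          using Z True unfolding Z_def by simp
        then show ?thesis using key[OF True, of X Y] by simp
      next
        case False then show ?thesis using hi XY by simp
      qed
    qed
  qed
  have C1: "Z j j j \<longleftrightarrow> mYB sc UNIV (A j j) \<alpha>" if "j<n" for j
  proof -
    have "E j j j X Y = 0 \<longleftrightarrow> comm (A j j X) (A j j Y)
        = A j j (comm (A j j X) Y + comm X (A j j Y)) - sc \<alpha> (comm X Y)" for X Y
      by (simp add: E_def additive.add[OF addA[OF that that]] algebra_simps)
    then show ?thesis unfolding Z_def mYB_def by simp
  qed
  have C2: "Z i j j \<longleftrightarrow> Hom (A i j) (A j j)" if "i<n" "j<n" "i \<noteq> j" for i j
  proof -
    have "E i j j X Y = 0 \<longleftrightarrow> comm (A i j X) (A i j Y)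
        = A i j (comm (A j j X) Y + comm X (A j j Y))" for X Y
      using that by (simp add: E_def additive.add[OF addA[OF that(1,2)]] algebra_simps)
    then show ?thesis unfolding Z_def Hom_def by simp
  qed
  have C3: "Z i j k \<longleftrightarrow> (\<forall>X Y.
       comm (A i j X) (A i k Y) = A i k (comm (A k j X) Y) + A i j (comm X (A j k Y)))"
    if "i<j" "j<k" for i j k
  proof -
    have "E i j k X Y = 0 \<longleftrightarrow>
       comm (A i j X) (A i k Y) = A i k (comm (A k j X) Y) + A i j (comm X (A j k Y))" for X Y
      using that by (simp add: E_def algebra_simps)
    then show ?thesis unfolding Z_def by simp
  qed
  show ?thesis
  proof
    assume M: "mYB (dscale sc) (dsum n) (blockop n A) \<alpha>"
    then have Z: "\<forall>i<n. \<forall>a<n. \<forall>b<n. Z i a b" using Ecomp by blast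
    show "(\<forall>j<n. mYB sc UNIV (A j j) \<alpha>) \<and>
           (\<forall>i<n. \<forall>j<n. i \<noteq> j \<longrightarrow> Hom (A i j) (A j j)) \<and>
           (\<forall>i j k. i < j \<and> j < k \<and> k < n \<longrightarrow> (\<forall>X Y.
              comm (A i j X) (A i k Y) = A i k (comm (A k j X) Y) + A i j (comm X (A j k Y))))"
    proof (intro conjI allI impI)
      fix j assume "j<n" then show "mYB sc UNIV (A j j) \<alpha>" using Z C1 by blast
    next
      fix i j assume "i<n" "j<n" "i \<noteq> j" then show "Hom (A i j) (A j j)" using Z C2 by blast
    next
      fix i j k X Y assume ijk: "i < j \<and> j < k \<and> k < n"
      then have "Z i j k" using Z by auto
      then show "comm (A i j X) (A i k Y) = A i k (comm (A k j X) Y) + A i j (comm X (A j k Y))"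
        using C3 ijk by blast
    qed
  next
    assume H: "(\<forall>j<n. mYB sc UNIV (A j j) \<alpha>) \<and>
           (\<forall>i<n. \<forall>j<n. i \<noteq> j \<longrightarrow> Hom (A i j) (A j j)) \<and>
           (\<forall>i j k. i < j \<and> j < k \<and> k < n \<longrightarrow> (\<forall>X Y.
              comm (A i j X) (A i k Y) = A i k (comm (A k j X) Y) + A i j (comm X (A j k Y))))"
    from H have H1: "\<forall>j<n. mYB sc UNIV (A j j) \<alpha>" by (rule conjunct1)
    have H2: "\<forall>i<n. \<forall>j<n. i \<noteq> j \<longrightarrow> Hom (A i j) (A j j)" by (rule conjunct1[OF conjunct2[OF H]])
    have H3: "\<forall>i j k. i < j \<and> j < k \<and> k < n \<longrightarrow> (\<forall>X Y.
              comm (A i j X) (A i k Y) = A i k (comm (A k j X) Y) + A i j (comm X (A j k Y)))"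
      by (rule conjunct2[OF conjunct2[OF H]])
    have sorted: "Z i a b" if "i \<le> a" "a \<le> b" "b < n" for i a b
    proof -
      consider "i = a" "a = b" | "i < a" "a = b" | "i < a" "a < b" | "i = a" "a < b"
        by (cases "i = a"; cases "a = b") (use \<open>i \<le> a\<close> \<open>a \<le> b\<close> in auto)
      then show ?thesis
      proof cases
        case 1
        have "mYB sc UNIV (A b b) \<alpha>" using H1 that by blast
        then have "Z b b b" using C1[of b] that by blast
        then show ?thesis using 1 by simp
      next
        case 2
        have "Hom (A i b) (A b b)" using H2 that 2 by simp
        then have "Z i b b" using C2[of i b] that 2 by simp
        then show ?thesis using 2 by simp
      next
        case 3
        have "\<forall>X Y. comm (A i a X) (A i b Y) = A i b (comm (A b a X) Y) + A i a (comm X (A a b Y))"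
          using H3[rule_format, of i a b] that 3 by simp
        then show ?thesis using C3[of i a b] 3 by simp
      next
        case 4
        have "Hom (A b a) (A a a)" using H2 that 4 by simp
        then have "Z b a a" using C2[of b a] that 4 by simp
        then have "Z a a b" using Zcyc[of b a a] 4 that by simp
        then show ?thesis using 4 by simp
      qed
    qed
    have all: "Z i a b" if "i<n" "a<n" "b<n" for i a b
    proof -
      consider "i\<le>a" "a\<le>b" | "i\<le>b" "b\<le>a" | "a\<le>i" "i\<le>b" | "a\<le>b" "b\<le>i"
        | "b\<le>i" "i\<le>a" | "b\<le>a" "a\<le>i"
        by (cases "i \<le> a"; cases "a \<le> b"; cases "i \<le> b") auto
      then show ?thesis
      proof cases
        case 1 then show ?thesis using sorted that by blast
      next
        case 2 then show ?thesis using sorted[of i b a] Zsym[of i b a] that by blast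
      next
        case 3 then show ?thesis using sorted[of a i b] Zcyc[of a i b] Zsym[of i b a] that by blast
      next
        case 4 then show ?thesis using sorted[of a b i] Zcyc[of a b i] Zcyc[of b i a] that by blast
      next
        case 5 then show ?thesis using sorted[of b i a] Zcyc[of b i a] that by blast
      next
        case 6 then show ?thesis using sorted[of b a i] Zsym[of b a i] Zcyc[of b i a] that by blast
      qed
    qed
    then show "mYB (dscale sc) (dsum n) (blockop n A) \<alpha>" using Ecomp by blast
  qed
qed

end
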